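(* There exists a countable two-dimensional subshift of finite type $X$ that has infinitely many periodic points and whose subpattern poset $(X/\!\approx, \succcurlyeq)$ contains an infinite antichain.
   Context: A two-dimensional SFT is the set of configurations in $S^{\mathbb{Z}^2}$ ($S$ finite) avoiding a finite set of forbidden finite patterns. For configurations $x,y$, $x \succcurlyeq y$ means every finite pattern occurring in $y$ also occurs in $x$; $x \approx y$ means $x \succcurlyeq y$ and $y \succcurlyeq x$. The subpattern poset of $X$ is $(X/\!\approx, \succcurlyeq)$. An antichain is a set of pairwise incomparable elements. *)

theory Defs
  imports Main "HOL-Library.Countable_Set"
begin

type_synonym 'a config = "int \<times> int \<Rightarrow> 'a"
type_synonym 'a pattern = "int \<times> int \<Rightarrow> 'a option"

definition vadd :: "int \<times> int \<Rightarrow> int \<times> int \<Rightarrow> int \<times> int" where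
  "vadd u v = (fst u + fst v, snd u + snd v)"

definition shift :: "int \<times> int \<Rightarrow> 'a config \<Rightarrow> 'a config" where
  "shift v x = (\<lambda>u. x (vadd u v))"

definition is_pattern :: "'a pattern \<Rightarrow> bool" where
  "is_pattern p \<longleftrightarrow> finite (dom p)"

definition occurs :: "'a pattern \<Rightarrow> 'a config \<Rightarrow> bool" where
  "occurs p x \<longleftrightarrow> (\<exists>v. \<forall>u\<in>dom p. p u = Some (x (vadd u v)))"

definition is_SFT :: "'a set \<Rightarrow> 'a config set \<Rightarrow> bool" where
  "is_SFT S X \<longleftrightarrow> finite S \<and> (\<exists>F. finite F \<and> (\<forall>p\<in>F. is_pattern p) \<and>
      X = {x. (\<forall>u. x u \<in> S) \<and> (\<forall>p\<in>F. \<not> occurs p x)})"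

definition subpat_ge :: "'a config \<Rightarrow> 'a config \<Rightarrow> bool" (infix "\<succcurlyeq>" 50) where
  "x \<succcurlyeq> y \<longleftrightarrow> (\<forall>p. is_pattern p \<longrightarrow> occurs p y \<longrightarrow> occurs p x)"

definition subpat_equiv :: "'a config \<Rightarrow> 'a config \<Rightarrow> bool" where
  "subpat_equiv x y \<longleftrightarrow> x \<succcurlyeq> y \<and> y \<succcurlyeq> x"

definition periodic :: "'a config \<Rightarrow> bool" where
  "periodic x \<longleftrightarrow> finite (range (\<lambda>v. shift v x))"

definition subpat_classes :: "'a config set \<Rightarrow> 'a config set set" where
  "subpat_classes X = (\<lambda>x. {y\<in>X. subpat_equiv x y}) ` X"

definition class_ge :: "'a config set \<Rightarrow> 'a config set \<Rightarrow> bool" where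
  "class_ge C D \<longleftrightarrow> (\<forall>x\<in>C. \<forall>y\<in>D. x \<succcurlyeq> y)"

definition antichain_in :: "'a config set \<Rightarrow> 'a config set set \<Rightarrow> bool" where
  "antichain_in X A \<longleftrightarrow> A \<subseteq> subpat_classes X \<and>
     (\<forall>C\<in>A. \<forall>D\<in>A. C \<noteq> D \<longrightarrow> \<not> class_ge C D \<and> \<not> class_ge D C)"

end

theory Submission
  imports Defs
begin


definition VC :: "nat \<Rightarrow> bool" where "VC s \<longleftrightarrow> s = 2 \<or> s = 5"
definition HC :: "nat \<Rightarrow> bool" where "HC s \<longleftrightarrow> s = 2 \<or> s = 4"
definition DC :: "nat \<Rightarrow> bool" where "DC s \<longleftrightarrow> s = 2 \<or> s = 3"

definition okR :: "nat \<Rightarrow> nat \<Rightarrow> bool" where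
 "okR s t \<longleftrightarrow> (HC s \<longleftrightarrow> HC t) \<and> (s=5 \<longrightarrow> t\<in>{0,3}) \<and> (s=0 \<longrightarrow> t\<in>{0,3})
   \<and> (s=1 \<longrightarrow> t\<in>{1,5}) \<and> (s=3 \<longrightarrow> t\<in>{1,5}) \<and> (t=0 \<longrightarrow> s\<in>{0,5}) \<and> (t=1 \<longrightarrow> s\<in>{1,3})"
definition okU :: "nat \<Rightarrow> nat \<Rightarrow> bool" where
 "okU s t \<longleftrightarrow> (VC s \<longleftrightarrow> VC t) \<and> (s=4 \<longrightarrow> t\<in>{1,3}) \<and> (s=1 \<longrightarrow> t\<in>{1,3})
   \<and> (s=0 \<longrightarrow> t\<in>{0,4}) \<and> (t=0 \<longrightarrow> s\<in>{0,3}) \<and> (t=1 \<longrightarrow> s\<in>{1,4})"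
definition okD :: "nat \<Rightarrow> nat \<Rightarrow> bool" where
 "okD s t \<longleftrightarrow> (DC s \<longleftrightarrow> DC t)"

definition SS :: "nat set" where "SS = {0,1,2,3,4,5}"

definition pat :: "int \<times> int \<Rightarrow> nat \<Rightarrow> nat \<Rightarrow> nat pattern" where
  "pat d s t = [(0,0) \<mapsto> s, d \<mapsto> t]"

definition FF :: "nat pattern set" where
  "FF = (\<lambda>(s,t). pat (1,0) s t) ` {(s,t). s\<in>SS \<and> t\<in>SS \<and> \<not> okR s t}
      \<union> (\<lambda>(s,t). pat (0,1) s t) ` {(s,t). s\<in>SS \<and> t\<in>SS \<and> \<not> okU s t}
      \<union> (\<lambda>(s,t). pat (1,1) s t) ` {(s,t). s\<in>SS \<and> t\<in>SS \<and> \<not> okD s t}"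

definition XX :: "nat config set" where
  "XX = {x. (\<forall>u. x u \<in> SS) \<and> (\<forall>p\<in>FF. \<not> occurs p x)}"

lemma dom_pat: "d \<noteq> (0,0) \<Longrightarrow> dom (pat d s t) = {(0,0), d}"
  by (auto simp: pat_def dom_def)

lemma occurs_pat: "d \<noteq> (0,0) \<Longrightarrow> occurs (pat d s t) x \<longleftrightarrow> (\<exists>v. x v = s \<and> x (vadd d v) = t)"
  unfolding occurs_def dom_pat
  by (auto simp: pat_def vadd_def)

lemma finite_FF: "finite FF"
proof -
  have "finite (SS \<times> SS)" by (simp add: SS_def)
  then have f: "\<And>P. finite {(s,t). s\<in>SS \<and> t\<in>SS \<and> P s t}"
    by (rule finite_subset[rotated]) auto
  show ?thesis unfolding FF_def by (intro finite_UnI finite_imageI f)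
qed

lemma FF_pat: "p \<in> FF \<Longrightarrow> is_pattern p"
  unfolding FF_def is_pattern_def by (auto simp: dom_pat)

lemma SFT_XX: "is_SFT SS XX"
  unfolding is_SFT_def XX_def using finite_FF FF_pat by (auto simp: SS_def)

lemma vadd_simps: "vadd (1,0) (i,j) = (i+1,j)" "vadd (0,1) (i,j) = (i,j+1)" "vadd (1,1) (i,j) = (i+1,j+1)"
  by (auto simp: vadd_def)

lemma memXX: "x \<in> XX \<longleftrightarrow> (\<forall>u. x u \<in> SS) \<and> (\<forall>i j. okR (x(i,j)) (x(i+1,j)) \<and> okU (x(i,j)) (x(i,j+1)) \<and> okD (x(i,j)) (x(i+1,j+1)))"
proof
  assume x: "x \<in> XX"
  then have S: "\<forall>u. x u \<in> SS" and F: "\<forall>p\<in>FF. \<not> occurs p x" by (auto simp: XX_def)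
  have "okR (x(i,j)) (x(i+1,j)) \<and> okU (x(i,j)) (x(i,j+1)) \<and> okD (x(i,j)) (x(i+1,j+1))" for i j
  proof (intro conjI)
    show "okR (x(i,j)) (x(i+1,j))"
    proof (rule ccontr)
      assume "\<not> ?thesis"
      then have "pat (1,0) (x(i,j)) (x(i+1,j)) \<in> FF" using S unfolding FF_def by blast
      moreover have "occurs (pat (1,0) (x(i,j)) (x(i+1,j))) x"
        by (subst occurs_pat) (auto intro!: exI[of _ "(i,j)"] simp: vadd_simps)
      ultimately show False using F by blast
    qed
    show "okU (x(i,j)) (x(i,j+1))"
    proof (rule ccontr)
      assume "\<not> ?thesis"
      then have "pat (0,1) (x(i,j)) (x(i,j+1)) \<in> FF" using S unfolding FF_def by blast
      moreover have "occurs (pat (0,1) (x(i,j)) (x(i,j+1))) x"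
        by (subst occurs_pat) (auto intro!: exI[of _ "(i,j)"] simp: vadd_simps)
      ultimately show False using F by blast
    qed
    show "okD (x(i,j)) (x(i+1,j+1))"
    proof (rule ccontr)
      assume "\<not> ?thesis"
      then have "pat (1,1) (x(i,j)) (x(i+1,j+1)) \<in> FF" using S unfolding FF_def by blast
      moreover have "occurs (pat (1,1) (x(i,j)) (x(i+1,j+1))) x"
        by (subst occurs_pat) (auto intro!: exI[of _ "(i,j)"] simp: vadd_simps)
      ultimately show False using F by blast
    qed
  qed
  then show "(\<forall>u. x u \<in> SS) \<and> (\<forall>i j. okR (x(i,j)) (x(i+1,j)) \<and> okU (x(i,j)) (x(i,j+1)) \<and> okD (x(i,j)) (x(i+1,j+1)))"
    using S by blast
next
  assume A: "(\<forall>u. x u \<in> SS) \<and> (\<forall>i j. okR (x(i,j)) (x(i+1,j)) \<and> okU (x(i,j)) (x(i,j+1)) \<and> okD (x(i,j)) (x(i+1,j+1)))"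
  have "\<not> occurs p x" if "p \<in> FF" for p
    using that unfolding FF_def
  proof (elim UnE imageE)
    fix st assume "st \<in> {(s,t). s\<in>SS \<and> t\<in>SS \<and> \<not> okR s t}" "p = (\<lambda>(s,t). pat (1,0) s t) st"
    then obtain s t where "p = pat (1,0) s t" "\<not> okR s t" by auto
    then show ?thesis using A by (auto simp: occurs_pat vadd_def add.commute)
  next
    fix st assume "st \<in> {(s,t). s\<in>SS \<and> t\<in>SS \<and> \<not> okU s t}" "p = (\<lambda>(s,t). pat (0,1) s t) st"
    then obtain s t where "p = pat (0,1) s t" "\<not> okU s t" by auto
    then show ?thesis using A by (auto simp: occurs_pat vadd_def add.commute)
  next
    fix st assume "st \<in> {(s,t). s\<in>SS \<and> t\<in>SS \<and> \<not> okD s t}" "p = (\<lambda>(s,t). pat (1,1) s t) st"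
    then obtain s t where "p = pat (1,1) s t" "\<not> okD s t" by auto
    then show ?thesis using A by (auto simp: occurs_pat vadd_def add.commute)
  qed
  then show "x \<in> XX" using A by (auto simp: XX_def)
qed


lemma int_all_iff:
  fixes f :: "int \<Rightarrow> bool"
  assumes "\<And>k. f k \<longleftrightarrow> f (k+1)"
  shows "f k \<longleftrightarrow> f 0"
proof (induct k rule: int_induct[where k=0])
  case base then show ?case by simp
next
  case (step1 i) then show ?case using assms[of i] by simp
next
  case (step2 i) then show ?case using assms[of "i-1"] by simp
qed

lemma int_connect:
  fixes f :: "int \<Rightarrow> bool"
  assumes "f a" "\<And>k. f k \<Longrightarrow> f (k+1)" "\<And>k. f k \<Longrightarrow> f (k - 1)"
  shows "f b"
proof (induct b rule: int_induct[where k=a])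
  case base then show ?case using assms by simp
next
  case (step1 i) then show ?case using assms by simp
next
  case (step2 i) then show ?case using assms by simp
qed

locale inX =
  fixes x :: "nat config"
  assumes alph: "\<And>u. x u \<in> SS"
  and oR: "\<And>i j. okR (x(i,j)) (x(i+1,j))"
  and oU: "\<And>i j. okU (x(i,j)) (x(i,j+1))"
  and oD: "\<And>i j. okD (x(i,j)) (x(i+1,j+1))"
begin

definition "Pset = {i. VC (x(i,0))}"
definition "Qset = {j. HC (x(0,j))}"
definition "Rset = {k. DC (x(k,0))}"

lemma inP: "VC (x(i,j)) \<longleftrightarrow> i \<in> Pset"
proof -
  have "VC (x(i,j)) \<longleftrightarrow> VC (x(i,0))"
    by (rule int_all_iff[where f="\<lambda>j. VC (x(i,j))"]) (use oU in \<open>simp add: okU_def\<close>)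
  then show ?thesis by (simp add: Pset_def)
qed

lemma inQ: "HC (x(i,j)) \<longleftrightarrow> j \<in> Qset"
proof -
  have "HC (x(i,j)) \<longleftrightarrow> HC (x(0,j))"
    by (rule int_all_iff[where f="\<lambda>i. HC (x(i,j))"]) (use oR in \<open>simp add: okR_def\<close>)
  then show ?thesis by (simp add: Qset_def)
qed

lemma inR: "DC (x(i,j)) \<longleftrightarrow> i - j \<in> Rset"
proof -
  have "DC (x(i-j+j,j)) \<longleftrightarrow> DC (x(i-j+0,0))"
  proof (rule int_all_iff[where f="\<lambda>t. DC (x(i-j+t,t))"])
    fix k show "DC (x(i-j+k,k)) \<longleftrightarrow> DC (x(i-j+(k+1),k+1))"
      using oD[of "i-j+k" k] by (simp add: okD_def algebra_simps)
  qed
  then show ?thesis by (simp add: Rset_def)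
qed

lemma a_VH: "VC (x u) \<Longrightarrow> HC (x u) \<Longrightarrow> x u = 2" by (auto simp: VC_def HC_def)
lemma a_VD: "VC (x u) \<Longrightarrow> DC (x u) \<Longrightarrow> x u = 2" by (auto simp: VC_def DC_def)
lemma a_HD: "HC (x u) \<Longrightarrow> DC (x u) \<Longrightarrow> x u = 2" by (auto simp: HC_def DC_def)
lemma a_2: "x u = 2 \<Longrightarrow> VC (x u) \<and> HC (x u) \<and> DC (x u)" by (auto simp: VC_def DC_def HC_def)
lemma a_V: "VC (x u) \<Longrightarrow> \<not> HC (x u) \<Longrightarrow> x u = 5" by (auto simp: VC_def HC_def)
lemma a_H: "HC (x u) \<Longrightarrow> \<not> VC (x u) \<Longrightarrow> x u = 4" by (auto simp: VC_def HC_def)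
lemma a_D: "DC (x u) \<Longrightarrow> \<not> VC (x u) \<Longrightarrow> x u = 3" by (auto simp: VC_def DC_def)
lemma a_5: "x u = 5 \<Longrightarrow> VC (x u)" by (auto simp: VC_def)
lemma a_3: "x u = 3 \<Longrightarrow> DC (x u)" by (auto simp: DC_def)

lemma walkVA:
  assumes "x(p,j) \<in> {0,5}"
  shows "(\<forall>k. p < k \<and> k \<le> p + int (Suc m) \<longrightarrow> x(k,j) \<noteq> 3) \<Longrightarrow> x(p + int (Suc m), j) = 0"
proof (induct m)
  case 0
  then have "x(p+1,j) \<noteq> 3" by auto
  moreover have "okR (x(p,j)) (x(p+1,j))" by (rule oR)
  ultimately show ?case using assms by (auto simp: okR_def)
next
  case (Suc m)
  then have h: "x(p + int (Suc m), j) = 0" by auto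
  have "x(p + int (Suc m) + 1,j) \<noteq> 3" using Suc.prems by auto
  moreover have "okR (x(p + int (Suc m),j)) (x(p + int (Suc m)+1,j))" by (rule oR)
  ultimately have "x(p + int (Suc m) + 1, j) = 0" using h by (auto simp: okR_def)
  then show ?case by (simp add: add.assoc)
qed

lemma walkDB:
  assumes "x(p,j) \<in> {1,3}"
  shows "(\<forall>k. p < k \<and> k \<le> p + int (Suc m) \<longrightarrow> x(k,j) \<noteq> 5) \<Longrightarrow> x(p + int (Suc m), j) = 1"
proof (induct m)
  case 0
  then have "x(p+1,j) \<noteq> 5" by auto
  moreover have "okR (x(p,j)) (x(p+1,j))" by (rule oR)
  ultimately show ?case using assms by (auto simp: okR_def)
next
  case (Suc m)
  then have h: "x(p + int (Suc m), j) = 1" by auto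
  have "x(p + int (Suc m) + 1,j) \<noteq> 5" using Suc.prems by auto
  moreover have "okR (x(p + int (Suc m),j)) (x(p + int (Suc m)+1,j))" by (rule oR)
  ultimately have "x(p + int (Suc m) + 1, j) = 1" using h by (auto simp: okR_def)
  then show ?case by (simp add: add.assoc)
qed

lemma walkHB:
  assumes "x(i,q) \<in> {1,4}"
  shows "(\<forall>k. q < k \<and> k \<le> q + int (Suc m) \<longrightarrow> x(i,k) \<noteq> 3) \<Longrightarrow> x(i, q + int (Suc m)) = 1"
proof (induct m)
  case 0
  then have "x(i,q+1) \<noteq> 3" by auto
  moreover have "okU (x(i,q)) (x(i,q+1))" by (rule oU)
  ultimately show ?case using assms by (auto simp: okU_def)
next
  case (Suc m)
  then have h: "x(i,q + int (Suc m)) = 1" by auto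
  have "x(i,q + int (Suc m) + 1) \<noteq> 3" using Suc.prems by auto
  moreover have "okU (x(i,q + int (Suc m))) (x(i,q + int (Suc m)+1))" by (rule oU)
  ultimately have "x(i,q + int (Suc m) + 1) = 1" using h by (auto simp: okU_def)
  then show ?case by (simp add: add.assoc)
qed

lemma between_VV:
  assumes "x(p1,j) = 5" "x(p2,j) = 5" "p1 < p2"
  shows "\<exists>d. p1 < d \<and> d < p2 \<and> x(d,j) = 3"
proof (rule ccontr)
  assume "\<not> ?thesis"
  note nex = this
  have e: "p1 + int (Suc (nat (p2-p1-1))) = p2" using assms by auto
  have n: "\<forall>k. p1 < k \<and> k \<le> p1 + int (Suc (nat (p2-p1-1))) \<longrightarrow> x(k,j) \<noteq> 3"
  proof (intro allI impI)
    fix k assume k: "p1 < k \<and> k \<le> p1 + int (Suc (nat (p2-p1-1)))"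
    show "x(k,j) \<noteq> 3"
    proof (cases "k = p2")
      case True then show ?thesis using assms by simp
    next
      case False then show ?thesis using k e nex by auto
    qed
  qed
  have "x(p1 + int (Suc (nat (p2-p1-1))), j) = 0" by (rule walkVA[OF _ n]) (use assms in auto)
  moreover have "p1 + int (Suc (nat (p2-p1-1))) = p2" using assms by auto
  ultimately show False using assms by simp
qed

lemma between_DD:
  assumes "x(p1,j) = 3" "x(p2,j) = 3" "p1 < p2"
  shows "\<exists>d. p1 < d \<and> d < p2 \<and> x(d,j) = 5"
proof (rule ccontr)
  assume "\<not> ?thesis"
  note nex = this
  have e: "p1 + int (Suc (nat (p2-p1-1))) = p2" using assms by auto
  have n: "\<forall>k. p1 < k \<and> k \<le> p1 + int (Suc (nat (p2-p1-1))) \<longrightarrow> x(k,j) \<noteq> 5"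
  proof (intro allI impI)
    fix k assume k: "p1 < k \<and> k \<le> p1 + int (Suc (nat (p2-p1-1)))"
    show "x(k,j) \<noteq> 5"
    proof (cases "k = p2")
      case True then show ?thesis using assms by simp
    next
      case False then show ?thesis using k e nex by auto
    qed
  qed
  have "x(p1 + int (Suc (nat (p2-p1-1))), j) = 1" by (rule walkDB[OF _ n]) (use assms in auto)
  moreover have "p1 + int (Suc (nat (p2-p1-1))) = p2" using assms by auto
  ultimately show False using assms by simp
qed

lemma between_HH:
  assumes "x(i,q1) = 4" "x(i,q2) = 4" "q1 < q2"
  shows "\<exists>d. q1 < d \<and> d < q2 \<and> x(i,d) = 3"
proof (rule ccontr)
  assume "\<not> ?thesis"
  note nex = this
  have e: "q1 + int (Suc (nat (q2-q1-1))) = q2" using assms by auto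
  have n: "\<forall>k. q1 < k \<and> k \<le> q1 + int (Suc (nat (q2-q1-1))) \<longrightarrow> x(i,k) \<noteq> 3"
  proof (intro allI impI)
    fix k assume k: "q1 < k \<and> k \<le> q1 + int (Suc (nat (q2-q1-1)))"
    show "x(i,k) \<noteq> 3"
    proof (cases "k = q2")
      case True then show ?thesis using assms by simp
    next
      case False then show ?thesis using k e nex by auto
    qed
  qed
  have "x(i,q1 + int (Suc (nat (q2-q1-1)))) = 1" by (rule walkHB[OF _ n]) (use assms in auto)
  moreover have "q1 + int (Suc (nat (q2-q1-1))) = q2" using assms by auto
  ultimately show False using assms by simp
qed

end


definition FP :: "int set set" where
  "FP = {A. finite A \<or> (\<exists>n>0. \<forall>i. i \<in> A \<longleftrightarrow> i + n \<in> A)}"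

lemma two_elems:
  fixes A :: "int set"
  assumes "infinite A" shows "\<exists>a b. a < b \<and> a \<in> A \<and> b \<in> A"
proof -
  obtain a where a: "a \<in> A" using assms by (metis finite.emptyI ex_in_conv)
  have "infinite (A - {a})" using assms by simp
  then obtain b where b: "b \<in> A - {a}" by (metis finite.emptyI ex_in_conv)
  show ?thesis
  proof (cases "a < b")
    case True then show ?thesis using a b by blast
  next
    case False then have "b < a" using b by auto
    then show ?thesis using a b by blast
  qed
qed

context inX begin

lemma PQ:
  assumes "p \<in> Pset" "q \<in> Qset"
  shows "p + t \<in> Pset \<longleftrightarrow> q + t \<in> Qset"
proof -
  have "x(p,q) = 2" using assms inP inQ a_VH by blast
  then have "DC (x(p,q))" using a_2 by blast
  then have r: "p - q \<in> Rset" using inR by blast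
  have d: "DC (x(p+t,q+t))" using inR r by simp
  show ?thesis
  proof
    assume "p + t \<in> Pset"
    then have "x(p+t,q+t) = 2" using d inP a_VD by blast
    then show "q + t \<in> Qset" using a_2 inQ by blast
  next
    assume "q + t \<in> Qset"
    then have "x(p+t,q+t) = 2" using d inQ a_HD by blast
    then show "p + t \<in> Pset" using a_2 inP by blast
  qed
qed

lemma Q_ne:
  assumes "p1 \<in> Pset" "p2 \<in> Pset" "p1 < p2"
  shows "Qset \<noteq> {}"
proof (cases "0 \<in> Qset")
  case True then show ?thesis by auto
next
  case False
  have "x(p1,0) = 5" "x(p2,0) = 5" using assms False inP inQ a_V by blast+
  then obtain d where d: "p1 < d" "d < p2" "x(d,0) = 3" using between_VV assms by blast
  have "DC (x(d,0))" using d a_3 by blast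
  then have "d \<in> Rset" using inR by force
  then have "DC (x(p2, p2 - d))" using inR by simp
  then have "x(p2, p2-d) = 2" using assms inP a_VD by blast
  then have "p2 - d \<in> Qset" using a_2 inQ by blast
  then show ?thesis by auto
qed

lemma P_ne:
  assumes "q1 \<in> Qset" "q2 \<in> Qset" "q1 < q2"
  shows "Pset \<noteq> {}"
proof (cases "0 \<in> Pset")
  case True then show ?thesis by auto
next
  case False
  have "x(0,q1) = 4" "x(0,q2) = 4" using assms False inP inQ a_H by blast+
  then obtain d where d: "q1 < d" "d < q2" "x(0,d) = 3" using between_HH assms by blast
  have "DC (x(0,d))" using d a_3 by blast
  then have "-d \<in> Rset" using inR by force
  then have "DC (x(q2 - d, q2))" using inR by simp
  then have "x(q2-d, q2) = 2" using assms inQ a_HD by blast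
  then have "q2 - d \<in> Pset" using a_2 inP by blast
  then show ?thesis by auto
qed

lemma P_FP: "Pset \<in> FP"
proof (cases "finite Pset")
  case True then show ?thesis by (simp add: FP_def)
next
  case False
  then obtain p1 p2 where p: "p1 < p2" "p1 \<in> Pset" "p2 \<in> Pset" using two_elems by blast
  then obtain q where q: "q \<in> Qset" using Q_ne by blast
  have "i \<in> Pset \<longleftrightarrow> i + (p2 - p1) \<in> Pset" for i
  proof -
    have "i \<in> Pset \<longleftrightarrow> p1 + (i - p1) \<in> Pset" by simp
    also have "\<dots> \<longleftrightarrow> q + (i - p1) \<in> Qset" using PQ p q by blast
    also have "\<dots> \<longleftrightarrow> p2 + (i - p1) \<in> Pset" using PQ p q by blast
    finally show ?thesis by (simp add: algebra_simps)
  qed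
  then show ?thesis using p unfolding FP_def by (intro CollectI disjI2 exI[of _ "p2-p1"]) auto
qed

lemma Q_FP: "Qset \<in> FP"
proof (cases "finite Qset")
  case True then show ?thesis by (simp add: FP_def)
next
  case False
  then obtain q1 q2 where q: "q1 < q2" "q1 \<in> Qset" "q2 \<in> Qset" using two_elems by blast
  then obtain p where p: "p \<in> Pset" using P_ne by blast
  have "i \<in> Qset \<longleftrightarrow> i + (q2 - q1) \<in> Qset" for i
  proof -
    have "i \<in> Qset \<longleftrightarrow> q1 + (i - q1) \<in> Qset" by simp
    also have "\<dots> \<longleftrightarrow> p + (i - q1) \<in> Pset" using PQ p q by blast
    also have "\<dots> \<longleftrightarrow> q2 + (i - q1) \<in> Qset" using PQ p q by blast
    finally show ?thesis by (simp add: algebra_simps)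
  qed
  then show ?thesis using q unfolding FP_def by (intro CollectI disjI2 exI[of _ "q2-q1"]) auto
qed

lemma R_FP: "Rset \<in> FP"
proof (cases "Pset = {}")
  case False
  then obtain p where p: "p \<in> Pset" by blast
  have R: "k \<in> Rset \<longleftrightarrow> p - k \<in> Qset" for k
  proof -
    have v: "VC (x(p,p-k))" using p inP by blast
    have "k \<in> Rset \<longleftrightarrow> DC (x(p,p-k))" using inR by simp
    also have "\<dots> \<longleftrightarrow> x(p,p-k) = 2" using v a_VD a_2 by blast
    also have "\<dots> \<longleftrightarrow> HC (x(p,p-k))" using v a_VH a_2 by blast
    finally show ?thesis using inQ by blast
  qed
  have "Qset \<in> FP" by (rule Q_FP)
  then show ?thesis unfolding FP_def
  proof (elim CollectE disjE exE conjE)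
    assume "finite Qset"
    then have "finite ((\<lambda>q. p - q) ` Qset)" by simp
    moreover have "Rset \<subseteq> (\<lambda>q. p - q) ` Qset"
      using R by (auto intro: image_eqI[where x="p - _"])
    ultimately show "Rset \<in> {A. finite A \<or> (\<exists>n>0. \<forall>i. (i \<in> A) = (i + n \<in> A))}"
      by (auto intro: finite_subset)
  next
    fix n :: int assume n: "n > 0" "\<forall>i. (i \<in> Qset) = (i + n \<in> Qset)"
    have "k \<in> Rset \<longleftrightarrow> k + n \<in> Rset" for k
      using R[of k] R[of "k+n"] n(2)[rule_format, of "p - k - n"] by (simp add: algebra_simps)
    then show "Rset \<in> {A. finite A \<or> (\<exists>n>0. \<forall>i. (i \<in> A) = (i + n \<in> A))}" using n by auto
  qed
next
  case P: True
  show ?thesis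
  proof (cases "Qset = {}")
    case False
    then obtain q where q: "q \<in> Qset" by blast
    have "Rset = {}"
    proof (rule ccontr)
      assume "Rset \<noteq> {}"
      then obtain k where "k \<in> Rset" by blast
      then have "DC (x(k+q,q))" using inR by simp
      moreover have "HC (x(k+q,q))" using q inQ by blast
      ultimately have "x(k+q,q) = 2" using a_HD by blast
      then have "k + q \<in> Pset" using a_2 inP by blast
      then show False using P by blast
    qed
    then show ?thesis by (simp add: FP_def)
  next
    case Q: True
    have no2: "\<not> (k1 < k2 \<and> k1 \<in> Rset \<and> k2 \<in> Rset)" for k1 k2
    proof
      assume k: "k1 < k2 \<and> k1 \<in> Rset \<and> k2 \<in> Rset"
      have nv: "\<not> VC (x(i,j))" for i j using P inP by blast
      have "DC (x(k1,0))" "DC (x(k2,0))" using k inR by force+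
      then have "x(k1,0) = 3" "x(k2,0) = 3" using nv a_D by blast+
      then obtain d where "x(d,0) = 5" using between_DD k by blast
      then show False using nv a_5 by blast
    qed
    have "finite Rset"
    proof (cases "Rset = {}")
      case True then show ?thesis by simp
    next
      case False
      then obtain k where k: "k \<in> Rset" by blast
      have "Rset \<subseteq> {k}"
      proof
        fix k' assume "k' \<in> Rset"
        then show "k' \<in> {k}" using no2[of k k'] no2[of k' k] k by (cases "k < k'"; cases "k' < k") auto
      qed
      then show ?thesis by (rule finite_subset) simp
    qed
    then show ?thesis by (simp add: FP_def)
  qed
qed

end


lemma per_mod:
  fixes A :: "int set"
  assumes n: "n > 0" and per: "\<forall>i. i \<in> A \<longleftrightarrow> i + n \<in> A"
  shows "i \<in> A \<longleftrightarrow> i mod n \<in> A"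
proof -
  have k: "i mod n + k * n \<in> A \<longleftrightarrow> i mod n + 0 * n \<in> A" for k
  proof (rule int_all_iff[where f="\<lambda>k. i mod n + k * n \<in> A"])
    fix k show "i mod n + k * n \<in> A \<longleftrightarrow> i mod n + (k + 1) * n \<in> A"
      using per[rule_format, of "i mod n + k * n"] by (simp add: algebra_simps)
  qed
  have "i mod n + (i div n) * n = i" by (simp add: div_mult_mod_eq add.commute)
  then show ?thesis using k[of "i div n"] by simp
qed

lemma countable_FP: "countable FP"
proof -
  have c: "countable {A::int set. \<forall>i. i \<in> A \<longleftrightarrow> i + n \<in> A}" if n: "n > 0" for n :: int
  proof (rule countable_image_inj_on[where f="\<lambda>A. A \<inter> {0..<n}"])
    show "countable ((\<lambda>A. A \<inter> {0..<n}) ` {A. \<forall>i. (i \<in> A) = (i + n \<in> A)})"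
      by (rule countable_subset[OF _ countable_Collect_finite]) auto
    show "inj_on (\<lambda>A. A \<inter> {0..<n}) {A. \<forall>i. (i \<in> A) = (i + n \<in> A)}"
    proof (rule inj_onI)
      fix A B assume A: "A \<in> {A. \<forall>i. (i \<in> A) = (i + n \<in> A)}" and B: "B \<in> {A. \<forall>i. (i \<in> A) = (i + n \<in> A)}"
        and e: "A \<inter> {0..<n} = B \<inter> {0..<n}"
      show "A = B"
      proof (rule set_eqI)
        fix i
        have m: "i mod n \<in> {0..<n}" using n by simp
        have "i \<in> A \<longleftrightarrow> i mod n \<in> A" using per_mod[OF n] A by blast
        also have "\<dots> \<longleftrightarrow> i mod n \<in> B" using e m by blast
        also have "\<dots> \<longleftrightarrow> i \<in> B" using per_mod[OF n] B by blast
        finally show "i \<in> A \<longleftrightarrow> i \<in> B" .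
      qed
    qed
  qed
  have "FP = {A. finite A} \<union> (\<Union>n\<in>{n::int. n > 0}. {A. \<forall>i. i \<in> A \<longleftrightarrow> i + n \<in> A})"
    unfolding FP_def by auto
  moreover have "countable ({A::int set. finite A} \<union> (\<Union>n\<in>{n::int. n > 0}. {A. \<forall>i. i \<in> A \<longleftrightarrow> i + n \<in> A}))"
    using c countable_Collect_finite by (intro countable_Un countable_UN) auto
  ultimately show ?thesis by simp
qed

lemma inX_iff: "inX x \<longleftrightarrow> x \<in> XX"
  unfolding memXX inX_def by blast

lemma nb_help:
  fixes a b u w :: nat
  assumes "a = 0 \<or> a = u" "b = 1 \<or> b = w" "VC u \<noteq> VC w \<or> HC u \<noteq> HC w \<or> DC u \<noteq> DC w"
    "\<not> VC 1 \<and> \<not> HC 1 \<and> \<not> DC 1" "VC u \<or> HC u \<or> DC u" "VC w \<or> HC w \<or> DC w"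
    "(VC a \<longleftrightarrow> VC b) \<and> (HC a \<longleftrightarrow> HC b) \<and> (DC a \<longleftrightarrow> DC b)" "\<not> VC 0 \<and> \<not> HC 0 \<and> \<not> DC 0"
  shows "a = 0 \<and> b = 1"
  using assms by metis

lemma det:
  assumes X: "inX x" and Y: "inX y"
  and same: "\<And>u. (VC (x u) \<longleftrightarrow> VC (y u)) \<and> (HC (x u) \<longleftrightarrow> HC (y u)) \<and> (DC (x u) \<longleftrightarrow> DC (y u))"
  and s: "x (i,j) = 0" "y (i,j) = 1"
  shows "x (a,b) = 0 \<and> y (a,b) = 1"
proof -
  let ?f = "\<lambda>i j. x (i,j) = 0 \<and> y (i,j) = 1"
  note ax = inX.alph[OF X] and ay = inX.alph[OF Y]
  have sR: "?f (i+1) j" if "?f i j" for i j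
  proof -
    have "x(i+1,j) = 0 \<or> x(i+1,j) = 3" "y(i+1,j) = 1 \<or> y(i+1,j) = 5"
      using that inX.oR[OF X, of i j] inX.oR[OF Y, of i j] by (simp_all add: okR_def)
    then show ?thesis by (rule nb_help[OF _ _ _ _ _ _ same[of "(i+1,j)"]]) (simp_all add: VC_def HC_def DC_def)
  qed
  have sL: "?f (i-1) j" if "?f i j" for i j
  proof -
    have "x(i-1,j) = 0 \<or> x(i-1,j) = 5" "y(i-1,j) = 1 \<or> y(i-1,j) = 3"
      using that inX.oR[OF X, of "i-1" j] inX.oR[OF Y, of "i-1" j] by (simp_all add: okR_def)
    then show ?thesis by (rule nb_help[OF _ _ _ _ _ _ same[of "(i-1,j)"]]) (simp_all add: VC_def HC_def DC_def)
  qed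
  have sU: "?f i (j+1)" if "?f i j" for i j
  proof -
    have "x(i,j+1) = 0 \<or> x(i,j+1) = 4" "y(i,j+1) = 1 \<or> y(i,j+1) = 3"
      using that inX.oU[OF X, of i j] inX.oU[OF Y, of i j] by (simp_all add: okU_def)
    then show ?thesis by (rule nb_help[OF _ _ _ _ _ _ same[of "(i,j+1)"]]) (simp_all add: VC_def HC_def DC_def)
  qed
  have sD: "?f i (j-1)" if "?f i j" for i j
  proof -
    have "x(i,j-1) = 0 \<or> x(i,j-1) = 3" "y(i,j-1) = 1 \<or> y(i,j-1) = 4"
      using that inX.oU[OF X, of i "j-1"] inX.oU[OF Y, of i "j-1"] by (simp_all add: okU_def)
    then show ?thesis by (rule nb_help[OF _ _ _ _ _ _ same[of "(i,j-1)"]]) (simp_all add: VC_def HC_def DC_def)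
  qed
  have "?f i b" by (rule int_connect[where f="?f i"]) (use s sU sD in auto)
  then show ?thesis by (rule int_connect[where f="\<lambda>a. ?f a b"]) (use sR sL in auto)
qed

lemma ab_help:
  fixes a b :: nat
  assumes "a \<in> SS" "b \<in> SS" "(VC a \<longleftrightarrow> VC b) \<and> (HC a \<longleftrightarrow> HC b) \<and> (DC a \<longleftrightarrow> DC b)" "a \<noteq> b"
  shows "a = 0 \<and> b = 1 \<or> a = 1 \<and> b = 0"
proof -
  have "a \<in> {0,1,2,3,4,5}" "b \<in> {0,1,2,3,4,5}" using assms(1,2) by (simp_all add: SS_def)
  then show ?thesis using assms(3,4) unfolding VC_def HC_def DC_def
    by (elim insertE emptyE) simp_all
qed

definition Phi :: "nat config \<Rightarrow> int set \<times> int set \<times> int set \<times> nat" where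
  "Phi x = (inX.Pset x, inX.Qset x, inX.Rset x, x (0,0))"

lemma Phi_inj: "inj_on Phi XX"
proof (rule inj_onI)
  fix x y assume x: "x \<in> XX" and y: "y \<in> XX" and e: "Phi x = Phi y"
  have X: "inX x" and Y: "inX y" using x y inX_iff by blast+
  have P: "inX.Pset x = inX.Pset y" and Q: "inX.Qset x = inX.Qset y" and R: "inX.Rset x = inX.Rset y"
    and O: "x (0,0) = y (0,0)" using e by (auto simp: Phi_def)
  have same: "(VC (x u) \<longleftrightarrow> VC (y u)) \<and> (HC (x u) \<longleftrightarrow> HC (y u)) \<and> (DC (x u) \<longleftrightarrow> DC (y u))" for u
  proof -
    obtain i j where u: "u = (i,j)" by (cases u)
    show ?thesis unfolding u
      using inX.inP[OF X, of i j] inX.inP[OF Y, of i j] inX.inQ[OF X, of i j] inX.inQ[OF Y, of i j]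
        inX.inR[OF X, of i j] inX.inR[OF Y, of i j] P Q R by simp
  qed
  show "x = y"
  proof (rule ccontr)
    assume "x \<noteq> y"
    then obtain u where "x u \<noteq> y u" by (meson ext)
    moreover obtain i j where "u = (i,j)" by (cases u)
    ultimately have ne: "x (i,j) \<noteq> y (i,j)" by simp
    have "x(i,j) = 0 \<and> y(i,j) = 1 \<or> x(i,j) = 1 \<and> y(i,j) = 0"
      using ab_help[OF inX.alph[OF X, of "(i,j)"] inX.alph[OF Y, of "(i,j)"] same[of "(i,j)"] ne] .
    then show False
    proof
      assume "x(i,j) = 0 \<and> y(i,j) = 1"
      then have "x(0,0) = 0 \<and> y(0,0) = 1" using det[OF X Y same] by blast
      then show False using O by auto
    next
      assume "x(i,j) = 1 \<and> y(i,j) = 0"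
      then have "y(0,0) = 0 \<and> x(0,0) = 1" using det[OF Y X] same by metis
      then show False using O by auto
    qed
  qed
qed

lemma countable_XX: "countable XX"
proof (rule countable_image_inj_on[OF _ Phi_inj])
  have "Phi ` XX \<subseteq> FP \<times> FP \<times> FP \<times> UNIV"
    using inX.P_FP inX.Q_FP inX.R_FP inX_iff by (auto simp: Phi_def)
  moreover have "countable (FP \<times> FP \<times> FP \<times> (UNIV :: nat set))"
    using countable_FP by auto
  ultimately show "countable (Phi ` XX)" by (rule countable_subset)
qed


definition gval :: "int \<Rightarrow> int \<Rightarrow> nat" where
  "gval a b = (if a = 0 \<and> b = 0 then 2 else if a = 0 then 5 else if b = 0 then 4
     else if a = b then 3 else if a < b then 0 else 1)"

lemma g1: "gval 0 0 = 2" "b \<noteq> 0 \<Longrightarrow> gval 0 b = 5" "a \<noteq> 0 \<Longrightarrow> gval a 0 = 4"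
  "a \<noteq> 0 \<Longrightarrow> gval a a = 3" "a \<noteq> 0 \<Longrightarrow> b \<noteq> 0 \<Longrightarrow> a < b \<Longrightarrow> gval a b = 0"
  "a \<noteq> 0 \<Longrightarrow> b \<noteq> 0 \<Longrightarrow> b < a \<Longrightarrow> gval a b = 1"
  by (auto simp: gval_def)

lemma gval_SS: "gval a b \<in> SS" by (simp add: gval_def SS_def)

lemma gval_2: "gval a b = 2 \<longleftrightarrow> a = 0 \<and> b = 0" by (simp add: gval_def)

lemma gval_DC: "DC (gval a b) \<longleftrightarrow> a = b" by (auto simp: gval_def DC_def)

lemma gR: "n \<ge> 2 \<Longrightarrow> 0 \<le> a \<Longrightarrow> a < n \<Longrightarrow> 0 \<le> b \<Longrightarrow> b < n \<Longrightarrow>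
   okR (gval a b) (gval (if a = n-1 then 0 else a+1) b)"
  apply (cases "a = n - 1")
   apply (cases "b = 0"; cases "b = a"; cases "a = 0"; simp add: g1 okR_def HC_def)
  apply (cases "b = 0"; cases "b = a"; cases "a = 0"; cases "a+1 = b"; cases "a + 1 < b"; simp add: g1 okR_def HC_def)
  done

lemma gU: "n \<ge> 2 \<Longrightarrow> 0 \<le> a \<Longrightarrow> a < n \<Longrightarrow> 0 \<le> b \<Longrightarrow> b < n \<Longrightarrow>
   okU (gval a b) (gval a (if b = n-1 then 0 else b+1))"
  apply (cases "b = n - 1")
   apply (cases "a = 0"; cases "b = a"; cases "b = 0"; simp add: g1 okU_def VC_def)
  apply (cases "a = 0"; cases "b = a"; cases "b = 0"; cases "b+1 = a"; cases "b + 1 < a"; simp add: g1 okU_def VC_def)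
  done

lemma gD: "n \<ge> 2 \<Longrightarrow> 0 \<le> a \<Longrightarrow> a < n \<Longrightarrow> 0 \<le> b \<Longrightarrow> b < n \<Longrightarrow>
   okD (gval a b) (gval (if a = n-1 then 0 else a+1) (if b = n-1 then 0 else b+1))"
  unfolding okD_def gval_DC by auto

definition grid :: "int \<Rightarrow> nat config" where
  "grid n = (\<lambda>(i,j). gval (i mod n) (j mod n))"

lemma mod_succ:
  fixes i n :: int
  assumes "n > 0"
  shows "(i+1) mod n = (if i mod n = n-1 then 0 else i mod n + 1)"
proof -
  have e: "(i+1) mod n = (i mod n + 1) mod n" by (simp add: mod_add_left_eq)
  have r: "0 \<le> i mod n" "i mod n < n" using assms by simp_all
  show ?thesis
  proof (cases "i mod n = n - 1")
    case True then show ?thesis using e by simp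
  next
    case False then have "i mod n + 1 < n" using r by simp
    then show ?thesis using e r False by simp
  qed
qed

lemma grid_XX: assumes n: "n \<ge> 2" shows "grid n \<in> XX"
  unfolding memXX
proof (intro conjI allI)
  fix u show "grid n u \<in> SS" by (cases u) (simp add: grid_def gval_SS)
next
  fix i j
  have n0: "n > 0" using n by simp
  have r: "0 \<le> i mod n" "i mod n < n" "0 \<le> j mod n" "j mod n < n" using n0 by simp_all
  show "okR (grid n (i, j)) (grid n (i + 1, j))"
    using gR[OF n r] by (simp add: grid_def mod_succ[OF n0])
  show "okU (grid n (i, j)) (grid n (i, j + 1))"
    using gU[OF n r] by (simp add: grid_def mod_succ[OF n0])
  show "okD (grid n (i, j)) (grid n (i + 1, j + 1))"
    using gD[OF n r] by (simp add: grid_def mod_succ[OF n0])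
qed

lemma grid_2: "grid n (i,j) = 2 \<longleftrightarrow> i mod n = 0 \<and> j mod n = 0"
  by (simp add: grid_def gval_2)

lemma grid_periodic: assumes n: "n \<ge> 2" shows "periodic (grid n)"
proof -
  have eq: "shift v (grid n) = shift (fst v mod n, snd v mod n) (grid n)" for v
  proof
    fix u
    show "shift v (grid n) u = shift (fst v mod n, snd v mod n) (grid n) u"
      by (cases u; cases v) (simp add: shift_def vadd_def grid_def mod_add_right_eq)
  qed
  have "shift v (grid n) \<in> (\<lambda>v. shift v (grid n)) ` ({0..<n} \<times> {0..<n})" for v
    apply (rule image_eqI[where x="(fst v mod n, snd v mod n)"])
     apply (rule eq)
    using n by simp
  then have "range (\<lambda>v. shift v (grid n)) \<subseteq> (\<lambda>v. shift v (grid n)) ` ({0..<n} \<times> {0..<n})"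
    by blast
  moreover have "finite ((\<lambda>v. shift v (grid n)) ` ({0..<n} \<times> {0..<n}))" by simp
  ultimately show ?thesis unfolding periodic_def by (rule finite_subset)
qed

lemma not_ge:
  assumes n: "n \<ge> 2" and m: "m \<ge> 2" and nm: "n \<noteq> m"
  shows "\<not> (grid n \<succcurlyeq> grid m)"
proof
  assume ge: "grid n \<succcurlyeq> grid m"
  define p :: "nat pattern" where "p = (\<lambda>u. if snd u = 0 \<and> 0 \<le> fst u \<and> fst u \<le> m then Some (grid m u) else None)"
  have dom: "dom p = {u. snd u = 0 \<and> 0 \<le> fst u \<and> fst u \<le> m}" unfolding dom_def p_def by (auto split: if_split_asm)
  have "dom p \<subseteq> {0..m} \<times> {0}" unfolding dom by auto
  then have "is_pattern p" unfolding is_pattern_def by (rule finite_subset) simp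
  moreover have "occurs p (grid m)" unfolding occurs_def dom
    by (rule exI[of _ "(0,0)"]) (auto simp: p_def vadd_def)
  ultimately have "occurs p (grid n)" using ge by (simp add: subpat_ge_def)
  then obtain v1 v2 where v: "\<forall>u\<in>dom p. p u = Some (grid n (vadd u (v1,v2)))"
    unfolding occurs_def by auto
  have "p (0,0) = Some (grid n (vadd (0,0) (v1,v2)))" using v m by (auto simp: dom)
  moreover have g00: "grid m (0,0) = 2" "grid m (m,0) = 2" by (simp_all add: grid_2)
  ultimately have "grid n (v1,v2) = 2" using m by (simp add: p_def vadd_def)
  then have v0: "v1 mod n = 0" "v2 mod n = 0" by (simp_all add: grid_2)
  have "p (m,0) = Some (grid n (vadd (m,0) (v1,v2)))" using v m by (auto simp: dom)
  then have "grid n (m + v1, v2) = 2" using m g00 by (simp add: p_def vadd_def)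
  then have "(m + v1) mod n = 0" by (simp add: grid_2)
  then have mm: "m mod n = 0" using v0 by (simp add: mod_add_right_eq[symmetric])
  show False
  proof (cases "n < m")
    case True
    have "p (n,0) = Some (grid n (vadd (n,0) (v1,v2)))" using v n True by (auto simp: dom)
    moreover have "grid n (vadd (n,0) (v1,v2)) = 2" using v0
      by (simp add: vadd_def grid_2 mod_add_right_eq[symmetric])
    moreover have "n mod m = n" using n True by simp
    moreover have "grid m (n,0) \<noteq> 2" using \<open>n mod m = n\<close> n by (simp add: grid_2)
    ultimately show False using n True by (simp add: p_def)
  next
    case False
    then have "m < n" using nm by simp
    then have "m mod n = m" using m by simp
    then show False using mm m by simp
  qed
qed

lemma ge_refl: "x \<succcurlyeq> x" by (simp add: subpat_ge_def)

lemma grid_inj: "inj_on grid {n. n \<ge> 2}"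
  by (rule inj_onI) (metis mem_Collect_eq not_ge ge_refl)

lemma infinite_ge2: "infinite {n::int. n \<ge> 2}"
  using infinite_Ici[of "2::int"] by (simp add: atLeast_def)

theorem mainTheorem9:
  shows "\<exists>(S :: nat set) (X :: nat config set).
           is_SFT S X \<and> countable X \<and> infinite {x\<in>X. periodic x} \<and>
           (\<exists>A. antichain_in X A \<and> infinite A)"
proof (intro exI conjI)
  show "is_SFT SS XX" by (rule SFT_XX)
  show "countable XX" by (rule countable_XX)
  have "grid ` {n. n \<ge> 2} \<subseteq> {x\<in>XX. periodic x}" using grid_XX grid_periodic by auto
  moreover have "infinite (grid ` {n. n \<ge> 2})"
    using finite_imageD[OF _ grid_inj] infinite_ge2 by blast
  ultimately show "infinite {x\<in>XX. periodic x}" using finite_subset by blast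
  define cls where "cls = (\<lambda>x. {y\<in>XX. subpat_equiv x y})"
  define A where "A = (\<lambda>n. cls (grid n)) ` {n. n \<ge> 2}"
  have mem: "grid n \<in> cls (grid n)" if "n \<ge> 2" for n
    using that grid_XX by (simp add: cls_def subpat_equiv_def ge_refl)
  have key: "\<not> class_ge (cls (grid n)) (cls (grid m))" if "n \<ge> 2" "m \<ge> 2" "n \<noteq> m" for n m
    using mem[OF that(1)] mem[OF that(2)] not_ge[OF that] unfolding class_ge_def by blast
  have inj: "inj_on (\<lambda>n. cls (grid n)) {n. n \<ge> 2}"
  proof (rule inj_onI)
    fix n m assume "n \<in> {n. n \<ge> (2::int)}" "m \<in> {n. n \<ge> (2::int)}" "cls (grid n) = cls (grid m)"
    then have n2: "n \<ge> 2" "m \<ge> 2" and e: "cls (grid n) = cls (grid m)" by auto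
    have "grid m \<in> cls (grid n)" using mem[OF n2(2)] e by simp
    then have "grid n \<succcurlyeq> grid m" by (simp add: cls_def subpat_equiv_def)
    then show "n = m" using not_ge[OF n2] by blast
  qed
  have s1: "A \<subseteq> subpat_classes XX"
    unfolding A_def subpat_classes_def cls_def using grid_XX by auto
  have s2: "\<not> class_ge C D \<and> \<not> class_ge D C" if hC: "C \<in> A" and hD: "D \<in> A" and hne: "C \<noteq> D" for C D
  proof -
    obtain n where n: "n \<ge> 2" "C = cls (grid n)" using hC unfolding A_def by blast
    obtain m where m: "m \<ge> 2" "D = cls (grid m)" using hD unfolding A_def by blast
    have "n \<noteq> m" using n m hne by auto
    note n m this
    then show ?thesis using key by auto
  qed
  show "antichain_in XX A" unfolding antichain_in_def using s1 s2 by blast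
  show "infinite A" unfolding A_def using finite_imageD[OF _ inj] infinite_ge2 by blast
qed

end
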